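(* Let $H_n$ be a maximal outerplanar graph with $n$ vertices and diameter $3$. Then $H_n$ contains an induced subgraph isomorphic to $G_6^1$ or to $G_6^2$.
   Context: An outerplanar graph is a graph drawable in the plane without crossings with all vertices on the outer face; it is maximal outerplanar if adding any edge between two nonadjacent vertices yields a non-outerplanar graph. $G_6^1$ is the graph on vertices $v_0,\dots,v_5$ with edges $v_1v_0, v_0v_4, v_4v_3, v_3v_5, v_5v_2, v_2v_1, v_0v_2, v_0v_3, v_2v_3$. $G_6^2$ is the graph on vertices $v_0,\dots,v_5$ with edges $v_0v_1, v_1v_2, v_2v_0, v_0v_3, v_2v_3, v_3v_4, v_4v_0, v_3v_5, v_5v_4$ (the fan with center $v_0$ over the path $v_1v_2v_3v_4$, plus a vertex $v_5$ adjacent to $v_3$ and $v_4$). *)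

theory Defs
  imports Main
begin

definition simple_graph :: "'a set \<Rightarrow> 'a set set \<Rightarrow> bool" where
  "simple_graph V E \<longleftrightarrow> finite V \<and> (\<forall>e\<in>E. \<exists>u v. u \<in> V \<and> v \<in> V \<and> u \<noteq> v \<and> e = {u, v})"

text \<open>Two chords {a,b} and {c,d} of a convex polygon whose vertices are labelled
  0..n-1 in cyclic order cross iff their endpoints strictly interleave.\<close>
definition chords_cross :: "nat \<Rightarrow> nat \<Rightarrow> nat \<Rightarrow> nat \<Rightarrow> bool" where
  "chords_cross a b c d \<longleftrightarrow>
     (let a' = min a b; b' = max a b; c' = min c d; d' = max c d in
       (a' < c' \<and> c' < b' \<and> b' < d') \<or> (c' < a' \<and> a' < d' \<and> d' < b'))"

text \<open>Outerplanar: the graph admits a crossing-free drawing with all vertices on the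
  outer face, i.e. (equivalently, the standard combinatorial form of such a drawing)
  the vertices can be placed in some cyclic order on a circle, edges drawn as straight
  chords, with no two edges crossing.\<close>
definition outerplanar :: "'a set \<Rightarrow> 'a set set \<Rightarrow> bool" where
  "outerplanar V E \<longleftrightarrow> simple_graph V E \<and>
     (\<exists>p. bij_betw p V {..<card V} \<and>
        (\<forall>u v x y. {u, v} \<in> E \<longrightarrow> {x, y} \<in> E \<longrightarrow>
            \<not> chords_cross (p u) (p v) (p x) (p y)))"

definition maximal_outerplanar :: "'a set \<Rightarrow> 'a set set \<Rightarrow> bool" where
  "maximal_outerplanar V E \<longleftrightarrow> outerplanar V E \<and>
     (\<forall>u\<in>V. \<forall>v\<in>V. u \<noteq> v \<longrightarrow> {u, v} \<notin> E \<longrightarrow> \<not> outerplanar V (insert {u, v} E))"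

text \<open>A walk of length k from u to v: a vertex list of length k+1.\<close>
definition walk :: "'a set set \<Rightarrow> 'a list \<Rightarrow> bool" where
  "walk E xs \<longleftrightarrow> xs \<noteq> [] \<and> (\<forall>i. Suc i < length xs \<longrightarrow> {xs ! i, xs ! Suc i} \<in> E)"

definition dist_le :: "'a set set \<Rightarrow> 'a \<Rightarrow> 'a \<Rightarrow> nat \<Rightarrow> bool" where
  "dist_le E u v k \<longleftrightarrow> (\<exists>xs. walk E xs \<and> hd xs = u \<and> last xs = v \<and> length xs \<le> Suc k)"

definition has_diameter :: "'a set \<Rightarrow> 'a set set \<Rightarrow> nat \<Rightarrow> bool" where
  "has_diameter V E d \<longleftrightarrow> (\<forall>u\<in>V. \<forall>v\<in>V. dist_le E u v d) \<and>
     (\<exists>u\<in>V. \<exists>v\<in>V. \<not> dist_le E u v (d - 1))"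

text \<open>Graphs on vertices 0..5 (v_i = i).\<close>
definition G6_1 :: "nat set set" where
  "G6_1 = {{1,0}, {0,4}, {4,3}, {3,5}, {5,2}, {2,1}, {0,2}, {0,3}, {2,3}}"

definition G6_2 :: "nat set set" where
  "G6_2 = {{0,1}, {1,2}, {2,0}, {0,3}, {2,3}, {3,4}, {4,0}, {3,5}, {5,4}}"

definition has_induced_copy :: "'a set \<Rightarrow> 'a set set \<Rightarrow> nat \<Rightarrow> nat set set \<Rightarrow> bool" where
  "has_induced_copy V E k F \<longleftrightarrow> (\<exists>f. inj_on f {..<k} \<and> f ` {..<k} \<subseteq> V \<and>
     (\<forall>i<k. \<forall>j<k. i \<noteq> j \<longrightarrow> ({f i, f j} \<in> E \<longleftrightarrow> {i, j} \<in> F)))"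

end

theory Submission
  imports Defs
begin

lemma max_pick:
  fixes b :: nat
  assumes "P a" "\<And>c. P c \<Longrightarrow> c < b"
  shows "\<exists>m. P m \<and> (\<forall>c. P c \<longrightarrow> c \<le> m)"
proof -
  have fin: "finite {c. P c}" by (rule finite_subset[of _ "{..<b}"]) (use assms(2) in auto)
  have ne: "{c. P c} \<noteq> {}" using assms(1) by auto
  show ?thesis using Max_in[OF fin ne] Max_ge[OF fin] by auto
qed

lemma min_pick:
  fixes a :: nat
  assumes "P a"
  shows "\<exists>m. P m \<and> (\<forall>c. P c \<longrightarrow> m \<le> c)"
  using assms by (metis Least_le LeastI)

lemma all6: "(\<forall>i<(6::nat). P i) \<longleftrightarrow> P 0 \<and> P 1 \<and> P 2 \<and> P 3 \<and> P 4 \<and> P 5"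
proof -
  have "{..<(6::nat)} = {0,1,2,3,4,5}" by auto
  then show ?thesis by (auto simp flip: lessThan_iff)
qed

locale tri =
  fixes adj :: "nat \<Rightarrow> nat \<Rightarrow> bool" and n :: nat
  assumes sym: "adj i j \<Longrightarrow> adj j i"
    and irr: "\<not> adj i i"
    and bnd: "adj i j \<Longrightarrow> i < n \<and> j < n"
    and nc: "adj i j \<Longrightarrow> adj k l \<Longrightarrow> \<not> chords_cross i j k l"
    and mx: "i < n \<Longrightarrow> j < n \<Longrightarrow> i \<noteq> j \<Longrightarrow> \<not> adj i j \<Longrightarrow> \<exists>k l. adj k l \<and> chords_cross i j k l"
begin

lemma side: assumes "Suc i < n" shows "adj i (Suc i)"
proof (rule ccontr)
  assume "\<not> adj i (Suc i)"
  then obtain k l where "adj k l" "chords_cross i (Suc i) k l" using mx[of i "Suc i"] assms by auto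
  then show False unfolding chords_cross_def Let_def by (auto simp: min_def max_def split: if_splits)
qed

lemma side0: assumes "0 < m" "Suc m = n" shows "adj 0 m"
proof (rule ccontr)
  assume "\<not> adj 0 m"
  then obtain k l where "adj k l" "chords_cross 0 m k l" using mx[of 0 m] assms by auto
  moreover have "k < n" "l < n" using bnd[OF \<open>adj k l\<close>] by auto
  ultimately show False using assms unfolding chords_cross_def Let_def by (auto simp: min_def max_def split: if_splits)
qed

lemma TL:
  assumes "adj u x" "adj u y" "x < y" "u < x \<or> y < u" "\<And>c. x < c \<Longrightarrow> c < y \<Longrightarrow> \<not> adj u c"
  shows "adj x y"
proof (rule ccontr)
  assume na: "\<not> adj x y"
  have "x < n" "y < n" using bnd assms by auto
  then obtain k l where kl: "adj k l" "chords_cross x y k l" using mx[of x y] na assms by auto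
  have "\<not> chords_cross u x k l" "\<not> chords_cross u y k l" using nc kl assms by auto
  moreover have "\<not> (x < k \<and> k < y \<and> l = u)" "\<not> (x < l \<and> l < y \<and> k = u)"
    using assms(5) kl sym by blast+
  ultimately show False using kl(2) assms(3,4) unfolding chords_cross_def Let_def
    by (auto simp: min_def max_def split: if_splits)
qed

lemma TL2:
  assumes "adj u x" "adj u y" "x < u" "u < y" "\<And>c. c < x \<or> y < c \<Longrightarrow> \<not> adj u c"
  shows "adj x y"
proof (rule ccontr)
  assume na: "\<not> adj x y"
  have "x < n" "y < n" using bnd assms by auto
  then obtain k l where kl: "adj k l" "chords_cross x y k l" using mx[of x y] na assms by auto
  have "\<not> chords_cross u x k l" "\<not> chords_cross u y k l" using nc kl assms by auto
  moreover have "\<not> ((k < x \<or> y < k) \<and> l = u)" "\<not> ((l < x \<or> y < l) \<and> k = u)"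
    using assms(5) kl sym by blast+
  ultimately show False using kl(2) assms(3,4) unfolding chords_cross_def Let_def
    by (auto simp: min_def max_def split: if_splits)
qed

lemma apex:
  assumes "adj x y" "Suc x < y"
  shows "\<exists>c. x < c \<and> c < y \<and> adj x c \<and> adj c y"
proof -
  have "Suc x < n" using bnd[OF assms(1)] assms(2) by auto
  then have "adj x (Suc x)" by (rule side)
  then obtain m where m: "x < m \<and> m < y \<and> adj x m" and mm: "\<forall>c. x < c \<and> c < y \<and> adj x c \<longrightarrow> c \<le> m"
    using max_pick[of "\<lambda>c. x < c \<and> c < y \<and> adj x c" "Suc x" y] assms by auto
  have "adj m y"
  proof (rule TL[of x])
    show "adj x m" using m by auto
    show "adj x y" by fact
    show "m < y" using m by auto
    show "x < m \<or> y < x" using m by auto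
    fix c assume "m < c" "c < y"
    show "\<not> adj x c"
    proof
      assume "adj x c"
      then have "c \<le> m" using mm m \<open>m < c\<close> \<open>c < y\<close> by auto
      then show False using \<open>m < c\<close> by simp
    qed
  qed
  then show ?thesis using m by auto
qed

lemma hex:
  assumes e: "adj c0 c1" "adj c1 c2" "adj c2 c0" "adj c0 c3" "adj c2 c3" "adj c3 c4" "adj c4 c0" "adj c3 c5" "adj c5 c4"
    and x: "chords_cross c0 c5 c3 c4" "chords_cross c1 c3 c0 c2" "chords_cross c1 c4 c0 c2"
      "chords_cross c1 c5 c0 c2" "chords_cross c2 c4 c0 c3" "chords_cross c2 c5 c0 c3"
    and d: "distinct [c0,c1,c2,c3,c4,c5]"
  shows "\<exists>c. inj_on c {..<6} \<and> (\<forall>i<6. c i < n) \<and>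
           (\<forall>i<6. \<forall>j<6. i \<noteq> j \<longrightarrow> (adj (c i) (c j) \<longleftrightarrow> {i,j} \<in> G6_2))"
proof -
  have e2: "adj c1 c0" "adj c2 c1" "adj c0 c2" "adj c3 c0" "adj c3 c2" "adj c4 c3" "adj c0 c4" "adj c5 c3" "adj c4 c5"
    using e sym by blast+
  have ne: "\<not>adj c0 c5" "\<not>adj c1 c3" "\<not>adj c1 c4" "\<not>adj c1 c5" "\<not>adj c2 c4" "\<not>adj c2 c5"
    using nc[OF _ e(6)] x(1) nc[OF _ e2(3)] x(2-4) nc[OF _ e(4)] x(5-6) by blast+
  have ne2: "\<not>adj c5 c0" "\<not>adj c3 c1" "\<not>adj c4 c1" "\<not>adj c5 c1" "\<not>adj c4 c2" "\<not>adj c5 c2"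
    using ne sym by blast+
  define c where "c = (\<lambda>i. [c0,c1,c2,c3,c4,c5] ! i)"
  have "inj_on c {..<6}" unfolding c_def by (rule inj_on_nth) (use d in auto)
  moreover have "\<forall>i<6. c i < n" unfolding all6 c_def using bnd e by auto
  moreover have "\<forall>i<6. \<forall>j<6. i \<noteq> j \<longrightarrow> (adj (c i) (c j) \<longleftrightarrow> {i,j} \<in> G6_2)"
    unfolding all6 c_def using e e2 ne ne2 by (simp add: G6_2_def doubleton_eq_iff)
  ultimately show ?thesis by blast
qed


lemma core:
  assumes b0: "0 < b" and bn: "b < n" and nab: "\<not> adj 0 b" and ncn: "\<And>c. adj 0 c \<Longrightarrow> \<not> adj c b"
  shows "\<exists>c. inj_on c {..<6} \<and> (\<forall>i<6. c i < n) \<and>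
           (\<forall>i<6. \<forall>j<6. i \<noteq> j \<longrightarrow> (adj (c i) (c j) \<longleftrightarrow> {i,j} \<in> G6_2))"
proof -
  have "b \<noteq> Suc 0" using nab side[of 0] bn by auto
  then have b2: "Suc 0 < b" using b0 by auto
  have n1: "Suc (n - 1) = n" "0 < n - 1" using b2 bn by auto
  have a0n: "adj 0 (n - 1)" using side0[OF n1(2) n1(1)] .
  then have "b \<noteq> n - 1" using nab by auto
  then have bn1: "b < n - 1" using bn by auto
  obtain x1 where x1: "0 < x1 \<and> x1 < b \<and> adj 0 x1" and x1m: "\<forall>c. 0 < c \<and> c < b \<and> adj 0 c \<longrightarrow> c \<le> x1"
    using max_pick[of "\<lambda>c. 0 < c \<and> c < b \<and> adj 0 c" "Suc 0" b] b2 side[of 0] bn by auto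
  obtain y1 where y1: "b < y1 \<and> y1 < n \<and> adj 0 y1" and y1m: "\<forall>c. b < c \<and> c < n \<and> adj 0 c \<longrightarrow> y1 \<le> c"
    using min_pick[of "\<lambda>c. b < c \<and> c < n \<and> adj 0 c" "n - 1"] bn1 a0n by auto
  have x1y1: "adj x1 y1"
  proof (rule TL[of 0])
    show "adj 0 x1" "adj 0 y1" "x1 < y1" "0 < x1 \<or> y1 < 0" using x1 y1 by auto
    fix c assume c: "x1 < c" "c < y1"
    show "\<not> adj 0 c"
    proof
      assume a: "adj 0 c"
      consider "c < b" | "c = b" | "b < c" by arith
      then show False
      proof cases
        case 1 then show False using spec[OF x1m, of c] a c x1 by auto
      next
        case 2 then show False using a nab by simp
      next
        case 3 then show False using spec[OF y1m, of c] a c bnd[OF a] by auto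
      qed
    qed
  qed
  obtain v where v: "x1 < v" "v < y1" "adj x1 v" "adj v y1" using apex[OF x1y1] x1 y1 by auto
  have "v \<noteq> b" using v(3) ncn x1 by auto
  then consider "v < b" | "b < v" by arith
  then show ?thesis
  proof cases
    case 1
    obtain X where X: "X < b \<and> adj X y1" and Xm: "\<forall>c. c < b \<and> adj c y1 \<longrightarrow> c \<le> X"
      using max_pick[of "\<lambda>c. c < b \<and> adj c y1" v b] 1 v by auto
    have vX: "v \<le> X" using spec[OF Xm, of v] 1 v by auto
    obtain u where u: "X < u" "u < y1" "adj X u" "adj u y1" using apex[of X y1] X y1 by auto
    have "u \<noteq> b" using ncn[of y1] y1 sym[OF u(4)] by auto
    moreover have "\<not> u < b" using spec[OF Xm, of u] u by auto
    ultimately have bu: "b < u" by arith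
    obtain z where z: "X < z" "z < u" "adj X z" "adj z u" using apex[of X u] X u bu by auto
    obtain w where w: "w < X \<and> adj w y1" and wm: "\<forall>c. c < X \<and> adj c y1 \<longrightarrow> c \<le> w"
      using max_pick[of "\<lambda>c. c < X \<and> adj c y1" x1 X] x1y1 v vX by auto
    have x1w: "x1 \<le> w" using spec[OF wm, of x1] x1y1 v vX by auto
    have wX: "adj w X"
    proof (rule TL[of y1])
      show "adj y1 w" "adj y1 X" using w X sym[of w y1] sym[of X y1] by auto
      show "w < X" "y1 < w \<or> X < y1" using w X y1 by auto
      fix c assume c: "w < c" "c < X"
      show "\<not> adj y1 c"
      proof
        assume "adj y1 c"
        then have "c \<le> w" using spec[OF wm, of c] c sym[OF \<open>adj y1 c\<close>] by auto
        then show False using c by simp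
      qed
    qed
    obtain w0 where w0: "w0 < w \<and> adj w0 y1" and w0m: "\<forall>c. c < w \<and> adj c y1 \<longrightarrow> c \<le> w0"
      using max_pick[of "\<lambda>c. c < w \<and> adj c y1" 0 w] y1 x1w x1 by auto
    have w0w: "adj w0 w"
    proof (rule TL[of y1])
      show "adj y1 w0" "adj y1 w" using w w0 sym[of w0 y1] sym[of w y1] by auto
      show "w0 < w" "y1 < w0 \<or> w < y1" using w0 w X y1 by auto
      fix c assume c: "w0 < c" "c < w"
      show "\<not> adj y1 c"
      proof
        assume "adj y1 c"
        then have "c \<le> w0" using spec[OF w0m, of c] c sym[OF \<open>adj y1 c\<close>] w0 by auto
        then show False using c by simp
      qed
    qed
    show ?thesis
    proof (rule hex[of y1 w0 w X u z])
      show "adj y1 w0" "adj w0 w" "adj w y1" "adj y1 X" "adj w X" "adj X u" "adj u y1" "adj X z" "adj z u"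
        using w0 w0w w X wX u z sym[of w0 y1] sym[of X y1] by auto
      have ord: "w0 < w" "w < X" "X < z" "z < u" "u < y1" using w0 w z u by auto
      then show "chords_cross y1 z X u" "chords_cross w0 X y1 w" "chords_cross w0 u y1 w"
        "chords_cross w0 z y1 w" "chords_cross w u y1 X" "chords_cross w z y1 X"
        unfolding chords_cross_def Let_def by (simp_all add: min_def max_def)
      show "distinct [y1, w0, w, X, u, z]" using ord by auto
    qed
  next
    case 2
    obtain Y where Y: "b < Y \<and> Y < n \<and> adj x1 Y" and Ym: "\<forall>c. b < c \<and> c < n \<and> adj x1 c \<longrightarrow> Y \<le> c"
      using min_pick[of "\<lambda>c. b < c \<and> c < n \<and> adj x1 c" v] 2 v y1 by auto
    have vY: "Y \<le> v" using spec[OF Ym, of v] 2 v y1 by auto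
    obtain u where u: "x1 < u" "u < Y" "adj x1 u" "adj u Y" using apex[of x1 Y] x1 Y by auto
    have "u \<noteq> b" using u(3) ncn x1 by blast
    moreover have "\<not> b < u" using spec[OF Ym, of u] u Y bnd[OF u(4)] by auto
    ultimately have ub: "u < b" by arith
    obtain z where z: "u < z" "z < Y" "adj u z" "adj z Y" using apex[of u Y] Y u ub by auto
    obtain w where w: "Y < w \<and> w < n \<and> adj x1 w" and wm: "\<forall>c. Y < c \<and> c < n \<and> adj x1 c \<longrightarrow> w \<le> c"
      using min_pick[of "\<lambda>c. Y < c \<and> c < n \<and> adj x1 c" y1] x1y1 v vY y1 by auto
    have Yw: "adj Y w"
    proof (rule TL[of x1])
      show "adj x1 Y" "adj x1 w" using w Y by auto
      show "Y < w" "x1 < Y \<or> w < x1" using w Y x1 by auto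
      fix c assume c: "Y < c" "c < w"
      show "\<not> adj x1 c"
      proof
        assume a: "adj x1 c"
        then have "w \<le> c" using spec[OF wm, of c] c a bnd[OF a] by auto
        then show False using c by simp
      qed
    qed
    have ord: "x1 < u" "u < z" "z < Y" "Y < w" using u z w by auto
    show ?thesis
    proof (cases "\<exists>c. w < c \<and> c < n \<and> adj x1 c")
      case True
      then obtain c' where "w < c' \<and> c' < n \<and> adj x1 c'" by blast
      then obtain w0 where w0: "w < w0 \<and> w0 < n \<and> adj x1 w0" and w0m: "\<forall>c. w < c \<and> c < n \<and> adj x1 c \<longrightarrow> w0 \<le> c"
        using min_pick[of "\<lambda>c. w < c \<and> c < n \<and> adj x1 c" c'] by blast
      have ww0: "adj w w0"
      proof (rule TL[of x1])
        show "adj x1 w" "adj x1 w0" using w w0 by auto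
        show "w < w0" "x1 < w \<or> w0 < x1" using w w0 Y x1 by auto
        fix c assume c: "w < c" "c < w0"
        show "\<not> adj x1 c"
        proof
          assume a: "adj x1 c"
          then have "w0 \<le> c" using spec[OF w0m, of c] c a bnd[OF a] by auto
          then show False using c by simp
        qed
      qed
      show ?thesis
      proof (rule hex[of x1 w0 w Y u z])
        show "adj x1 w0" "adj w0 w" "adj w x1" "adj x1 Y" "adj w Y" "adj Y u" "adj u x1" "adj Y z" "adj z u"
          using w0 ww0 w Y Yw u z sym[of x1 w] sym[of x1 u] sym[of u Y] sym[of z Y] sym[of w w0] sym[of Y w] sym[of u z] by auto
        show "chords_cross x1 z Y u" "chords_cross w0 Y x1 w" "chords_cross w0 u x1 w"
          "chords_cross w0 z x1 w" "chords_cross w u x1 Y" "chords_cross w z x1 Y"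
          using ord w0 unfolding chords_cross_def Let_def by (simp_all add: min_def max_def)
        show "distinct [x1, w0, w, Y, u, z]" using ord w0 by auto
      qed
    next
      case False
      have w0w: "adj 0 w"
      proof (rule TL2[of x1])
        show "adj x1 0" "adj x1 w" using w x1 sym[of 0 x1] by auto
        show "0 < x1" "x1 < w" using x1 ord by auto
        fix c assume c: "c < 0 \<or> w < c"
        show "\<not> adj x1 c"
        proof
          assume a: "adj x1 c"
          then show False using False c bnd[OF a] by auto
        qed
      qed
      show ?thesis
      proof (rule hex[of x1 0 w Y u z])
        show "adj x1 0" "adj 0 w" "adj w x1" "adj x1 Y" "adj w Y" "adj Y u" "adj u x1" "adj Y z" "adj z u"
          using x1 w0w w Y Yw u z sym[of 0 x1] sym[of x1 w] sym[of x1 u] sym[of u Y] sym[of z Y] sym[of w w0] sym[of Y w] sym[of u z] by auto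
        show "chords_cross x1 z Y u" "chords_cross 0 Y x1 w" "chords_cross 0 u x1 w"
          "chords_cross 0 z x1 w" "chords_cross w u x1 Y" "chords_cross w z x1 Y"
          using ord x1 unfolding chords_cross_def Let_def by (simp_all add: min_def max_def)
        show "distinct [x1, 0, w, Y, u, z]" using ord x1 by auto
      qed
    qed
  qed
qed

end

lemma rot_bij:
  assumes "0 < (n::nat)"
  shows "bij_betw (\<lambda>x. (x + k) mod n) {..<n} {..<n}"
proof -
  have inj: "inj_on (\<lambda>x. (x + k) mod n) {..<n}"
  proof (rule inj_onI)
    fix x y assume "x \<in> {..<n}" "y \<in> {..<n}" "(x + k) mod n = (y + k) mod n"
    then show "x = y"
    proof (induction x y rule: linorder_wlog)
      case (le a b)
      then have "n dvd (b + k) - (a + k)" using mod_eq_dvd_iff_nat[of "a+k" "b+k" n] by auto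
      then have "n dvd b - a" by simp
      moreover have "b - a < n" using le by auto
      ultimately have "b - a = 0" using dvd_imp_le by fastforce
      then show ?case using le by auto
    next
      case (sym a b) then show ?case by auto
    qed
  qed
  have sub: "(\<lambda>x. (x + k) mod n) ` {..<n} \<subseteq> {..<n}" using assms by auto
  show ?thesis unfolding bij_betw_def using inj endo_inj_surj[OF _ sub inj] by auto
qed
lemma walk1: "dist_le E a a k" unfolding dist_le_def walk_def by (rule exI[of _ "[a]"]) auto
lemma walk2: "{a,b} \<in> E \<Longrightarrow> dist_le E a b 2" unfolding dist_le_def walk_def
  by (rule exI[of _ "[a,b]"]) (auto simp: less_Suc_eq)
lemma walk3: "{a,c} \<in> E \<Longrightarrow> {c,b} \<in> E \<Longrightarrow> dist_le E a b 2" unfolding dist_le_def walk_def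
  by (rule exI[of _ "[a,c,b]"]) (auto simp: less_Suc_eq nth_Cons split: nat.splits)

lemma cc_swap1: "chords_cross a b c d = chords_cross b a c d"
  by (simp add: chords_cross_def Let_def min.commute max.commute)

lemma cc_swap2: "chords_cross a b c d = chords_cross c d a b"
  unfolding chords_cross_def Let_def by auto

lemma cc_same: "{a, b} = {c, d} \<Longrightarrow> \<not> chords_cross a b c d"
  unfolding chords_cross_def Let_def doubleton_eq_iff by (auto simp: min_def max_def)

lemma cc_pair: "{x, y} = {u, v} \<Longrightarrow> chords_cross (f x) (f y) c d = chords_cross (f u) (f v) c d"
  unfolding doubleton_eq_iff using cc_swap1 by metis

lemma cc_rot1:
  assumes "a < n" "b < n" "c < n" "d < n"
  shows "chords_cross (Suc a mod n) (Suc b mod n) (Suc c mod n) (Suc d mod n) = chords_cross a b c d"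
  using assms unfolding chords_cross_def Let_def mod_Suc
  by (auto simp: min_def max_def split: if_splits)

lemma cc_rot:
  assumes "a < n" "b < n" "c < n" "d < n"
  shows "chords_cross ((a+k) mod n) ((b+k) mod n) ((c+k) mod n) ((d+k) mod n) = chords_cross a b c d"
proof (induction k)
  case 0 then show ?case using assms by simp
next
  case (Suc k)
  have n: "n > 0" using assms by auto
  have "chords_cross ((a+Suc k) mod n) ((b+Suc k) mod n) ((c+Suc k) mod n) ((d+Suc k) mod n)
     = chords_cross (Suc ((a+k) mod n) mod n) (Suc ((b+k) mod n) mod n) (Suc ((c+k) mod n) mod n) (Suc ((d+k) mod n) mod n)"
    by (simp add: mod_Suc_eq)
  also have "\<dots> = chords_cross ((a+k) mod n) ((b+k) mod n) ((c+k) mod n) ((d+k) mod n)"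
    using n by (intro cc_rot1) auto
  finally show ?case using Suc by simp
qed

lemma sg_mem: assumes "simple_graph V E" "{a, b} \<in> E" shows "a \<in> V \<and> b \<in> V"
proof -
  obtain u v where "u \<in> V" "v \<in> V" "{a, b} = {u, v}" using assms unfolding simple_graph_def by blast
  moreover have "a \<in> {a, b}" "b \<in> {a, b}" by auto
  ultimately show ?thesis by auto
qed
lemma sg_ne: assumes "simple_graph V E" "{a, b} \<in> E" shows "a \<noteq> b"
proof -
  obtain u v where "u \<noteq> v" "{a, b} = {u, v}" using assms unfolding simple_graph_def by blast
  then show ?thesis by (auto simp: doubleton_eq_iff)
qed

theorem theorem3p2:
  fixes V :: "'a set" and E :: "'a set set"
  assumes "maximal_outerplanar V E"
    and "has_diameter V E 3"
  shows "has_induced_copy V E 6 G6_1 \<or> has_induced_copy V E 6 G6_2"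
proof -
  have op: "outerplanar V E" and mxE: "\<And>u v. u \<in> V \<Longrightarrow> v \<in> V \<Longrightarrow> u \<noteq> v \<Longrightarrow> {u, v} \<notin> E \<Longrightarrow> \<not> outerplanar V (insert {u, v} E)"
    using assms(1) unfolding maximal_outerplanar_def by auto
  have sg: "simple_graph V E" using op unfolding outerplanar_def by auto
  then have finV: "finite V" unfolding simple_graph_def by auto
  define n where "n = card V"
  obtain p where pb: "bij_betw p V {..<n}"
    and pnc: "\<And>u v x y. {u, v} \<in> E \<Longrightarrow> {x, y} \<in> E \<Longrightarrow> \<not> chords_cross (p u) (p v) (p x) (p y)"
    using op unfolding outerplanar_def n_def by blast
  obtain a b where aV: "a \<in> V" and bV: "b \<in> V" and nd: "\<not> dist_le E a b 2"
    using assms(2) unfolding has_diameter_def by auto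
  have ab: "a \<noteq> b" using nd walk1 by metis
  have nab: "{a, b} \<notin> E" using nd walk2 by metis
  have ncm: "\<And>c. {a, c} \<in> E \<Longrightarrow> {c, b} \<notin> E" using nd walk3 by metis
  have n0: "0 < n" using aV finV n_def card_gt_0_iff by blast
  have pa: "p a < n" using pb aV bij_betwE by blast
  define p' where "p' = (\<lambda>v. (p v + (n - p a)) mod n)"
  have p'a: "p' a = 0" unfolding p'_def using pa by simp
  have p'b: "bij_betw p' V {..<n}"
  proof -
    have "bij_betw ((\<lambda>x. (x + (n - p a)) mod n) \<circ> p) V {..<n}"
      by (rule bij_betw_trans[OF pb rot_bij[OF n0]])
    then show ?thesis unfolding p'_def comp_def .
  qed
  have pV: "\<And>v. v \<in> V \<Longrightarrow> p v < n" using pb bij_betwE by blast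
  have p'nc: "\<And>u v x y. {u, v} \<in> E \<Longrightarrow> {x, y} \<in> E \<Longrightarrow> \<not> chords_cross (p' u) (p' v) (p' x) (p' y)"
  proof -
    fix u v x y assume e: "{u, v} \<in> E" "{x, y} \<in> E"
    have "u \<in> V" "v \<in> V" "x \<in> V" "y \<in> V" using sg_mem[OF sg e(1)] sg_mem[OF sg e(2)] by auto
    then have "chords_cross (p' u) (p' v) (p' x) (p' y) = chords_cross (p u) (p v) (p x) (p y)"
      unfolding p'_def using pV cc_rot by blast
    then show "\<not> chords_cross (p' u) (p' v) (p' x) (p' y)" using pnc e by simp
  qed
  define q where "q = inv_into V p'"
  have qV: "\<And>i. i < n \<Longrightarrow> q i \<in> V" unfolding q_def
    using p'b by (metis bij_betw_imp_surj_on inv_into_into lessThan_iff)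
  have p'q: "\<And>i. i < n \<Longrightarrow> p' (q i) = i" unfolding q_def
    using p'b bij_betw_inv_into_right by fastforce
  have qp': "\<And>v. v \<in> V \<Longrightarrow> q (p' v) = v" unfolding q_def
    using p'b bij_betw_imp_inj_on inv_into_f_f by fastforce
  have p'V: "\<And>v. v \<in> V \<Longrightarrow> p' v < n" using p'b bij_betwE by blast
  define adj where "adj = (\<lambda>i j. i < n \<and> j < n \<and> {q i, q j} \<in> E)"
  have "tri adj n"
  proof
    fix i j show "adj i j \<Longrightarrow> adj j i" unfolding adj_def by (auto simp: insert_commute)
  next
    fix i show "\<not> adj i i" unfolding adj_def using sg_ne[OF sg, of "q i" "q i"] by auto
  next
    fix i j show "adj i j \<Longrightarrow> i < n \<and> j < n" unfolding adj_def by auto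
  next
    fix i j k l assume "adj i j" "adj k l"
    then show "\<not> chords_cross i j k l" unfolding adj_def using p'nc[of "q i" "q j" "q k" "q l"] p'q by auto
  next
    fix i j assume ij: "i < n" "j < n" "i \<noteq> j" "\<not> adj i j"
    define u where "u = q i"
    define v where "v = q j"
    have uv: "u \<in> V" "v \<in> V" "p' u = i" "p' v = j" using ij qV p'q u_def v_def by auto
    then have "u \<noteq> v" using ij by auto
    moreover have "{u, v} \<notin> E" using ij u_def v_def adj_def by auto
    ultimately have nop: "\<not> outerplanar V (insert {u, v} E)" using mxE uv by auto
    have sg2: "simple_graph V (insert {u, v} E)" using sg uv \<open>u \<noteq> v\<close> unfolding simple_graph_def by blast
    obtain a' b' x y where ins: "{a', b'} \<in> insert {u, v} E" "{x, y} \<in> insert {u, v} E"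
      and cr: "chords_cross (p' a') (p' b') (p' x) (p' y)"
      using nop sg2 p'b unfolding outerplanar_def n_def by blast
    have memV: "a' \<in> V" "b' \<in> V" "x \<in> V" "y \<in> V"
      using ins sg_mem[OF sg] uv by (auto simp: doubleton_eq_iff)
    show "\<exists>k l. adj k l \<and> chords_cross i j k l"
    proof (cases "{a', b'} = {u, v}")
      case True
      show ?thesis
      proof (cases "{x, y} = {u, v}")
        case True
        then have eqp: "{p' a', p' b'} = {p' x, p' y}" using \<open>{a', b'} = {u, v}\<close> by (metis image_empty image_insert)
        then show ?thesis using cc_same[OF eqp] cr by blast
      next
        case False
        then have xy: "{x, y} \<in> E" using ins by auto
        have "chords_cross i j (p' x) (p' y)" using cr cc_pair[OF True, of p'] uv by simp
        moreover have "adj (p' x) (p' y)" unfolding adj_def using memV p'V qp' xy by simp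
        ultimately show ?thesis by blast
      qed
    next
      case False
      then have ab': "{a', b'} \<in> E" using ins by auto
      show ?thesis
      proof (cases "{x, y} = {u, v}")
        case True
        have "chords_cross (p' x) (p' y) (p' a') (p' b')" using cr cc_swap2[of "p' a'" "p' b'" "p' x" "p' y"] by simp
        then have "chords_cross i j (p' a') (p' b')" using cc_pair[OF True, of p'] uv by simp
        moreover have "adj (p' a') (p' b')" unfolding adj_def using memV p'V qp' ab' by simp
        ultimately show ?thesis by blast
      next
        case False
        then have xyE: "{x, y} \<in> E" using ins by auto
        then show ?thesis using p'nc[OF ab' xyE] cr by blast
      qed
    qed
  qed
  then interpret T: tri adj n .
  have "p' b \<noteq> p' a" using ab aV bV p'b by (metis bij_betw_imp_inj_on inj_on_contraD)
  then have b0: "0 < p' b" using p'a by simp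
  have bn: "p' b < n" using p'V bV by auto
  have qa: "q 0 = a" using qp'[OF aV] p'a by simp
  have qb: "q (p' b) = b" using qp' bV by auto
  have nab': "\<not> adj 0 (p' b)" unfolding adj_def using qa qb nab by auto
  have ncn': "\<And>c. adj 0 c \<Longrightarrow> \<not> adj c (p' b)" unfolding adj_def using qa qb ncm by auto
  obtain c where c0: "inj_on c {..<6} \<and> (\<forall>i<6. c i < n) \<and>
    (\<forall>i<6. \<forall>j<6. i \<noteq> j \<longrightarrow> (adj (c i) (c j) \<longleftrightarrow> {i,j} \<in> G6_2))"
  proof -
    have "\<exists>c. inj_on c {..<6} \<and> (\<forall>i<6. c i < n) \<and>
      (\<forall>i<6. \<forall>j<6. i \<noteq> j \<longrightarrow> (adj (c i) (c j) \<longleftrightarrow> {i,j} \<in> G6_2))"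
    proof (rule T.core[of "p' b"])
      show "0 < p' b" "p' b < n" "\<not> adj 0 (p' b)" by fact+
      fix c' assume "adj 0 c'" then show "\<not> adj c' (p' b)" using ncn' by blast
    qed
    then show ?thesis using that by blast
  qed
  have c: "inj_on c {..<6}" "\<forall>i<6. c i < n"
    "\<forall>i<6. \<forall>j<6. i \<noteq> j \<longrightarrow> (adj (c i) (c j) \<longleftrightarrow> {i,j} \<in> G6_2)"
    using c0 by simp_all
  have "has_induced_copy V E 6 G6_2"
    unfolding has_induced_copy_def
  proof (intro exI[of _ "q \<circ> c"] conjI)
    have "inj_on q {..<n}" unfolding q_def
      by (rule inj_on_inv_into) (use p'b in \<open>simp add: bij_betw_def\<close>)
    moreover have "c ` {..<6} \<subseteq> {..<n}" using c(2) by auto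
    ultimately show "inj_on (q \<circ> c) {..<6}" using comp_inj_on[OF c(1)] inj_on_subset by blast
    show "(q \<circ> c) ` {..<6} \<subseteq> V" using c(2) qV by auto
    show "\<forall>i<6. \<forall>j<6. i \<noteq> j \<longrightarrow> ({(q \<circ> c) i, (q \<circ> c) j} \<in> E) = ({i, j} \<in> G6_2)"
    proof (intro allI impI)
      fix i j :: nat assume ij: "i < 6" "j < 6" "i \<noteq> j"
      have "adj (c i) (c j) \<longleftrightarrow> {i,j} \<in> G6_2" using c(3) ij by blast
      moreover have "c i < n" "c j < n" using c(2) ij by auto
      ultimately show "({(q \<circ> c) i, (q \<circ> c) j} \<in> E) = ({i, j} \<in> G6_2)" unfolding adj_def by simp
    qed
  qed
  then show ?thesis by simp
qed

end
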